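(* Let $d\ge 2$ and let $\mathcal{M}^d$ be the set of all maskable observables on $\mathbb{C}^d$, i.e. Hermitian $d\times d$ matrices $\mathcal{O}$ for which there exists some quantum channel $\mathcal{E}$ with $\mathcal{E}^*(\mathcal{O})=\mathbb{I}$. Then there is no single quantum channel $\mathcal{E}$ on $d\times d$ matrices such that $\mathcal{E}^*(\mathcal{O})=\mathbb{I}$ for all $\mathcal{O}\in\mathcal{M}^d$.
   Context: A quantum channel $\mathcal{E}$ is a linear completely positive trace-preserving map on $d\times d$ complex matrices, $\mathcal{E}(\rho)=\sum_i E_i\rho E_i^\dagger$ with $\sum_i E_i^\dagger E_i=\mathbb{I}$; its adjoint is $\mathcal{E}^*(X)=\sum_i E_i^\dagger X E_i$, so that $\operatorname{Tr}(\mathcal{E}(\rho)X)=\operatorname{Tr}(\rho\,\mathcal{E}^*(X))$. *)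

theory Defs
  imports "Jordan_Normal_Form.Matrix"
begin

definition dag :: "complex mat \<Rightarrow> complex mat" where
  "dag A = mat (dim_col A) (dim_row A) (\<lambda>(i,j). cnj (A $$ (j,i)))"

definition hermitian :: "nat \<Rightarrow> complex mat \<Rightarrow> bool" where
  "hermitian d Ob \<longleftrightarrow> Ob \<in> carrier_mat d d \<and> dag Ob = Ob"

definition msum :: "nat \<Rightarrow> complex mat list \<Rightarrow> complex mat" where
  "msum d Xs = foldr (+) Xs (0\<^sub>m d d)"

definition is_channel :: "nat \<Rightarrow> complex mat list \<Rightarrow> bool" where
  "is_channel d Es \<longleftrightarrow> (\<forall>E \<in> set Es. E \<in> carrier_mat d d) \<and>
     msum d (map (\<lambda>E. dag E * E) Es) = 1\<^sub>m d"

definition channel_apply :: "nat \<Rightarrow> complex mat list \<Rightarrow> complex mat \<Rightarrow> complex mat" where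
  "channel_apply d Es \<rho> = msum d (map (\<lambda>E. E * \<rho> * dag E) Es)"

definition channel_adj :: "nat \<Rightarrow> complex mat list \<Rightarrow> complex mat \<Rightarrow> complex mat" where
  "channel_adj d Es X = msum d (map (\<lambda>E. dag E * X * E) Es)"

definition maskable :: "nat \<Rightarrow> complex mat set" where
  "maskable d = {Ob. hermitian d Ob \<and> (\<exists>Es. is_channel d Es \<and> channel_adj d Es Ob = 1\<^sub>m d)}"

end

theory Submission
  imports Defs
begin

lemma sum_delta_r: "(k::nat) < d \<Longrightarrow> (\<Sum>c\<in>{0..<d}. f c * (if c = k then 1 else 0)) = (f k :: complex)"
  by (simp add: if_distrib[where f="\<lambda>x. _ * x"] cong: if_cong)

lemma sum_delta_l: "(k::nat) < d \<Longrightarrow> (\<Sum>c\<in>{0..<d}. (if c = k then 1 else 0) * f c) = (f k :: complex)"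
  by (simp add: if_distrib[where f="\<lambda>x. x * _"] cong: if_cong)

lemma one_smult_mat1[simp]: "(1::complex) \<cdot>\<^sub>m A = A"
  by (rule eq_matI) auto

definition ek :: "nat \<Rightarrow> nat \<Rightarrow> nat \<Rightarrow> complex mat" where
  "ek d k i = mat d d (\<lambda>(a,b). if a = k \<and> b = i then 1 else 0)"

lemma ek_carrier[simp]: "ek d k i \<in> carrier_mat d d"
  by (simp add: ek_def)

lemma dag_carrier[simp]: "E \<in> carrier_mat d d \<Longrightarrow> dag E \<in> carrier_mat d d"
  by (simp add: dag_def)

lemma dag_ek: "dag (ek d k i) = ek d i k"
  by (rule eq_matI) (auto simp: dag_def ek_def)

lemma ek_left:
  assumes "k < d" "X \<in> carrier_mat d d"
  shows "ek d i k * X = mat d d (\<lambda>(a,b). if a = i then X $$ (k,b) else 0)"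
proof (rule eq_matI)
  fix a b assume ab: "a < dim_row (mat d d (\<lambda>(a,b). if a = i then X $$ (k,b) else 0))"
     "b < dim_col (mat d d (\<lambda>(a,b). if a = i then X $$ (k,b) else 0))"
  then have "a < d" "b < d" by auto
  then have "(ek d i k * X) $$ (a,b) = (\<Sum>c\<in>{0..<d}. (if a = i \<and> c = k then 1 else 0) * X $$ (c,b))"
    using assms by (simp add: ek_def scalar_prod_def)
  also have "\<dots> = (if a = i then X $$ (k,b) else 0)"
    using assms(1) sum_delta_l[of k d "\<lambda>c. X $$ (c,b)"] by (cases "a = i") (simp_all cong: if_cong)
  finally show "(ek d i k * X) $$ (a,b) = mat d d (\<lambda>(a,b). if a = i then X $$ (k,b) else 0) $$ (a,b)"
    using \<open>a<d\<close> \<open>b<d\<close> by simp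
qed (use assms in \<open>auto simp: ek_def\<close>)

lemma ek_sandwich:
  assumes "k < d" "i < d" "X \<in> carrier_mat d d"
  shows "ek d i k * X * ek d k i = mat d d (\<lambda>(a,b). if a = i \<and> b = i then X $$ (k,k) else 0)"
proof (rule eq_matI)
  fix a b assume "a < dim_row (mat d d (\<lambda>(a,b). if a = i \<and> b = i then X $$ (k,k) else 0))"
     "b < dim_col (mat d d (\<lambda>(a,b). if a = i \<and> b = i then X $$ (k,k) else 0))"
  then have ab: "a < d" "b < d" by auto
  have "(ek d i k * X * ek d k i) $$ (a,b) =
     (\<Sum>c\<in>{0..<d}. (if a = i then X $$ (k,c) else 0) * (if c = k \<and> b = i then 1 else 0))"
    using assms ab unfolding ek_left[OF assms(1,3)] by (simp add: ek_def scalar_prod_def)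
  also have "\<dots> = (if a = i \<and> b = i then X $$ (k,k) else 0)"
    using assms(1) sum_delta_r[of k d "\<lambda>c. X $$ (k,c)"] by (cases "a = i \<and> b = i") (auto cong: if_cong)
  finally show "(ek d i k * X * ek d k i) $$ (a,b) = mat d d (\<lambda>(a,b). if a = i \<and> b = i then X $$ (k,k) else 0) $$ (a,b)"
    using ab by simp
qed (use assms in \<open>auto simp: ek_def\<close>)

lemma msum_index:
  assumes "\<forall>X\<in>set Xs. X \<in> carrier_mat d d"
  shows "msum d Xs \<in> carrier_mat d d \<and> (\<forall>a<d. \<forall>b<d. msum d Xs $$ (a,b) = (\<Sum>X\<leftarrow>Xs. X $$ (a,b)))"
  using assms by (induction Xs) (auto simp: msum_def)

definition chan :: "nat \<Rightarrow> nat \<Rightarrow> complex mat list" where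
  "chan d k = map (\<lambda>i. ek d k i) [0..<d]"

lemma chan_adj:
  assumes "k < d" "X \<in> carrier_mat d d"
  shows "channel_adj d (chan d k) X = X $$ (k,k) \<cdot>\<^sub>m 1\<^sub>m d"
proof -
  let ?Xs = "map (\<lambda>E. dag E * X * E) (chan d k)"
  have c: "\<forall>Y\<in>set ?Xs. Y \<in> carrier_mat d d" using assms by (auto simp: chan_def dag_ek intro!: mult_carrier_mat)
  note m = msum_index[OF c]
  show ?thesis unfolding channel_adj_def
  proof (rule eq_matI)
    fix a b assume "a < dim_row (X $$ (k,k) \<cdot>\<^sub>m 1\<^sub>m d)" "b < dim_col (X $$ (k,k) \<cdot>\<^sub>m 1\<^sub>m d)"
    then have ab: "a < d" "b < d" by auto
    have "msum d ?Xs $$ (a,b) = (\<Sum>i\<leftarrow>[0..<d]. (ek d i k * X * ek d k i) $$ (a,b))"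
      using m ab by (simp add: chan_def dag_ek comp_def)
    also have "\<dots> = (\<Sum>i\<in>{0..<d}. (if a = i \<and> b = i then X $$ (k,k) else 0))"
      unfolding sum_set_upt_conv_sum_list_nat[symmetric] set_upt
      by (intro sum.cong refl) (use ab assms in \<open>simp add: ek_sandwich\<close>)
    also have "\<dots> = (\<Sum>i\<in>{0..<d}. (if i = b then (if a = b then X $$ (k,k) else 0) else 0))"
      by (rule sum.cong) auto
    also have "\<dots> = (if a = b then X $$ (k,k) else 0)"
      using ab by simp
    finally show "msum d ?Xs $$ (a,b) = (X $$ (k,k) \<cdot>\<^sub>m 1\<^sub>m d) $$ (a,b)"
      using ab by simp
  qed (use m in auto)
qed

lemma chan_is_channel:
  assumes "k < d"
  shows "is_channel d (chan d k)"
proof -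
  have "map (\<lambda>E. dag E * E) (chan d k) = map (\<lambda>E. dag E * 1\<^sub>m d * E) (chan d k)"
    by (auto simp: chan_def dag_ek right_mult_one_mat[OF ek_carrier])
  then have "msum d (map (\<lambda>E. dag E * E) (chan d k)) = channel_adj d (chan d k) (1\<^sub>m d)"
    unfolding channel_adj_def by (rule arg_cong)
  also have "\<dots> = 1\<^sub>m d" using chan_adj[OF assms, of "1\<^sub>m d"] assms by simp
  finally show ?thesis by (auto simp: is_channel_def chan_def)
qed

lemma adj_add:
  assumes "is_channel d Es" "A \<in> carrier_mat d d" "B \<in> carrier_mat d d"
  shows "channel_adj d Es (A + B) = channel_adj d Es A + channel_adj d Es B"
proof -
  have E: "\<forall>E\<in>set Es. E \<in> carrier_mat d d" using assms(1) by (simp add: is_channel_def)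
  have c: "\<forall>Y\<in>set (map (\<lambda>E. dag E * X * E) Es). Y \<in> carrier_mat d d"
    if "X \<in> carrier_mat d d" for X using E that by (auto intro!: mult_carrier_mat)
  note mA = msum_index[OF c[OF assms(2)]] and mB = msum_index[OF c[OF assms(3)]]
  and mAB = msum_index[OF c[of "A+B"]]
  have eq: "dag E * (A + B) * E = dag E * A * E + dag E * B * E" if "E \<in> set Es" for E
  proof -
    have "E \<in> carrier_mat d d" using E that by auto
    moreover then have "dag E \<in> carrier_mat d d" by (simp add: dag_def)
    ultimately show ?thesis using assms
      by (simp add: mult_add_distrib_mat[of "dag E" d d A d B]
          add_mult_distrib_mat[of "dag E * A" d d "dag E * B" E d] mult_carrier_mat[of _ d d _ d])
  qed
  have ent: "(dag E * (A + B) * E) $$ (a,b) = (dag E * A * E) $$ (a,b) + (dag E * B * E) $$ (a,b)"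
    if "E \<in> set Es" "a < d" "b < d" for E a b
  proof -
    have Ec: "E \<in> carrier_mat d d" using that E by auto
    have "dag E * A * E \<in> carrier_mat d d" "dag E * B * E \<in> carrier_mat d d"
      using Ec assms by (intro mult_carrier_mat; auto)+
    then have "dim_row (dag E * B * E) = d" "dim_col (dag E * B * E) = d" by auto
    then show ?thesis unfolding eq[OF that(1)] using that(2,3) by (simp only: index_add_mat(1))
  qed
  show ?thesis unfolding channel_adj_def
  proof (rule eq_matI)
    fix a b assume "a < dim_row (msum d (map (\<lambda>E. dag E * A * E) Es) + msum d (map (\<lambda>E. dag E * B * E) Es))"
      "b < dim_col (msum d (map (\<lambda>E. dag E * A * E) Es) + msum d (map (\<lambda>E. dag E * B * E) Es))"
    then have ab: "a < d" "b < d" using mB by auto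
    have "msum d (map (\<lambda>E. dag E * (A+B) * E) Es) $$ (a,b) = (\<Sum>E\<leftarrow>Es. (dag E * (A+B) * E) $$ (a,b))"
      using mAB assms ab by (simp add: comp_def)
    also have "\<dots> = (\<Sum>E\<leftarrow>Es. (dag E * A * E) $$ (a,b) + (dag E * B * E) $$ (a,b))"
      by (rule arg_cong[where f=sum_list], rule map_cong) (use ent ab in auto)
    also have "\<dots> = (\<Sum>E\<leftarrow>Es. (dag E * A * E) $$ (a,b)) + (\<Sum>E\<leftarrow>Es. (dag E * B * E) $$ (a,b))"
      by (simp add: sum_list_addf)
    finally show "msum d (map (\<lambda>E. dag E * (A+B) * E) Es) $$ (a,b) =
      (msum d (map (\<lambda>E. dag E * A * E) Es) + msum d (map (\<lambda>E. dag E * B * E) Es)) $$ (a,b)"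
      using mA mB ab carrier_matD[of "msum d (map (\<lambda>E. dag E * B * E) Es)" d d] by (simp add: comp_def)
  qed (use mA mB mAB assms in auto)
qed

lemma ek_herm: "hermitian d (ek d i i)"
  by (simp add: hermitian_def dag_ek)

lemma maskable_I:
  assumes "hermitian d X" "k < d" "X $$ (k,k) = 1"
  shows "X \<in> maskable d"
  unfolding maskable_def using assms chan_is_channel[OF assms(2)] chan_adj[OF assms(2)]
  by (auto simp: hermitian_def intro!: exI[of _ "chan d k"])

theorem theorem5:
  fixes d :: nat
  assumes "d \<ge> 2"
  shows "\<not> (\<exists>Es. is_channel d Es \<and> (\<forall>Ob \<in> maskable d. channel_adj d Es Ob = 1\<^sub>m d))"
proof
  assume "\<exists>Es. is_channel d Es \<and> (\<forall>Ob \<in> maskable d. channel_adj d Es Ob = 1\<^sub>m d)"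
  then obtain Es where ch: "is_channel d Es" and all: "\<forall>Ob \<in> maskable d. channel_adj d Es Ob = 1\<^sub>m d"
    by blast
  have d0: "0 < d" and d1: "1 < d" using assms by auto
  have P0: "ek d 0 0 \<in> maskable d"
    by (rule maskable_I[OF ek_herm d0]) (use d0 in \<open>simp add: ek_def\<close>)
  have P1: "ek d 1 1 \<in> maskable d"
    by (rule maskable_I[OF ek_herm d1]) (use d1 in \<open>simp add: ek_def\<close>)
  have hC: "hermitian d (ek d 0 0 + ek d 1 1)"
    using ek_herm[of d 0] ek_herm[of d 1]
    by (auto simp: hermitian_def dag_def ek_def intro!: eq_matI)
  have C: "ek d 0 0 + ek d 1 1 \<in> maskable d"
    by (rule maskable_I[OF hC d0]) (use d0 d1 in \<open>simp add: ek_def\<close>)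
  have "1\<^sub>m d = channel_adj d Es (ek d 0 0 + ek d 1 1)" using all C by simp
  also have "\<dots> = 1\<^sub>m d + 1\<^sub>m d" using adj_add[OF ch ek_carrier ek_carrier] all P0 P1 by simp
  finally have "(1\<^sub>m d :: complex mat) $$ (0,0) = (1\<^sub>m d + 1\<^sub>m d) $$ (0,0)" by simp
  then show False using d0 by simp
qed

end
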